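(* Let $E$ be an IL FS encoder with $s$ states whose Kraft matrix is irreducible, let $L_{\max}=\max_{z,x}L[f(z,x)]$, let $\ell$ be a positive integer, and let $(Z,X^\ell)$ be random variables with an arbitrary joint distribution $P$ on $\mathcal{Z}\times\mathcal{X}^\ell$. Then $$\frac{\mathbb{E}\{L[f(Z,X^\ell)]\}}{\ell}\ \ge\ \frac{H(Z,X^\ell)}{\ell}-\frac{2\log_2 s+(s-1)L_{\max}}{\ell}\ \ge\ \frac{H(X^\ell)}{\ell}-\frac{2\log_2 s+(s-1)L_{\max}}{\ell},$$ where entropies are in bits. If moreover the marginal of $X^\ell$ is the $\ell$-dimensional marginal of a stationary process, then $$\frac{\mathbb{E}\{L[f(Z,X^\ell)]\}}{\ell}\ \ge\ H(X_\ell\mid X^{\ell-1})-\frac{2\log_2 s+(s-1)L_{\max}}{\ell}.$$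
   Context: A finite-state (FS) encoder is a quintuple $E=(\mathcal{X},\mathcal{Y},\mathcal{Z},f,g)$, where $\mathcal{X}$ is a finite source alphabet of size $\alpha$, $\mathcal{Y}$ is a finite set of binary strings (possibly containing the empty string, of length $0$), $\mathcal{Z}$ is a finite set of $s$ states, $f:\mathcal{Z}\times\mathcal{X}\to\mathcal{Y}$ is the output function and $g:\mathcal{Z}\times\mathcal{X}\to\mathcal{Z}$ is the next-state function. For $z\in\mathcal{Z}$ and $x^n=(x_1,\dots,x_n)\in\mathcal{X}^n$, set $z_1=z$, $z_{i+1}=g(z_i,x_i)$; write $g(z,x^n)=z_{n+1}$ and let $f(z,x^n)$ denote the binary string obtained by concatenating $f(z_1,x_1),\dots,f(z_n,x_n)$; its length is $L[f(z,x^n)]=\sum_{i=1}^n L[f(z_i,x_i)]$, where $L(\cdot)$ denotes the length of a binary string. The encoder is information lossless (IL) if for every $z\in\mathcal{Z}$ and every $n\ge1$, the map $x^n\mapsto (f(z,x^n),g(z,x^n))$ is injective on $\mathcal{X}^n$. The Kraft matrix of $E$ is the $s\times s$ nonnegative matrix $K$ with entries $K_{zz'}=\sum_{\{x\in\mathcal{X}:\ g(z,x)=z'\}}2^{-L[f(z,x)]}$ (an empty sum is $0$). *)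

theory Defs
  imports Complex_Main
begin

text \<open>An FS encoder: source alphabet = finite type 'x, states = finite type 'z,
  output function f :: 'z \<Rightarrow> 'x \<Rightarrow> bool list (binary strings),
  next-state function g :: 'z \<Rightarrow> 'x \<Rightarrow> 'z.\<close>

fun fstar :: "('z \<Rightarrow> 'x \<Rightarrow> bool list) \<Rightarrow> ('z \<Rightarrow> 'x \<Rightarrow> 'z) \<Rightarrow> 'z \<Rightarrow> 'x list \<Rightarrow> bool list" where
  "fstar f g z [] = []"
| "fstar f g z (x # xs) = f z x @ fstar f g (g z x) xs"

fun gstar :: "('z \<Rightarrow> 'x \<Rightarrow> 'z) \<Rightarrow> 'z \<Rightarrow> 'x list \<Rightarrow> 'z" where
  "gstar g z [] = z"
| "gstar g z (x # xs) = gstar g (g z x) xs"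

definition info_lossless :: "('z \<Rightarrow> 'x \<Rightarrow> bool list) \<Rightarrow> ('z \<Rightarrow> 'x \<Rightarrow> 'z) \<Rightarrow> bool" where
  "info_lossless f g \<longleftrightarrow>
     (\<forall>z n. n \<ge> 1 \<longrightarrow> inj_on (\<lambda>xs. (fstar f g z xs, gstar g z xs)) {xs. length xs = n})"

definition kraft_matrix :: "('z \<Rightarrow> 'x::finite \<Rightarrow> bool list) \<Rightarrow> ('z \<Rightarrow> 'x \<Rightarrow> 'z) \<Rightarrow> 'z \<Rightarrow> 'z \<Rightarrow> real" where
  "kraft_matrix f g z z' = (\<Sum>x\<in>{x. g z x = z'}. 2 powr (- real (length (f z x))))"

fun mat_pow :: "('z::finite \<Rightarrow> 'z \<Rightarrow> real) \<Rightarrow> nat \<Rightarrow> 'z \<Rightarrow> 'z \<Rightarrow> real" where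
  "mat_pow K 0 = (\<lambda>z z'. if z = z' then 1 else 0)"
| "mat_pow K (Suc n) = (\<lambda>z z'. \<Sum>w\<in>UNIV. mat_pow K n z w * K w z')"

definition irreducible_matrix :: "('z::finite \<Rightarrow> 'z \<Rightarrow> real) \<Rightarrow> bool" where
  "irreducible_matrix K \<longleftrightarrow> (\<forall>z z'. \<exists>k\<ge>1. mat_pow K k z z' > 0)"

definition L_max :: "('z::finite \<Rightarrow> 'x::finite \<Rightarrow> bool list) \<Rightarrow> nat" where
  "L_max f = Max {length (f z x) | z x. True}"

definition is_pmf_on :: "'a set \<Rightarrow> ('a \<Rightarrow> real) \<Rightarrow> bool" where
  "is_pmf_on A p \<longleftrightarrow> (\<forall>a. p a \<ge> 0) \<and> (\<forall>a. a \<notin> A \<longrightarrow> p a = 0) \<and> (\<Sum>a\<in>A. p a) = 1"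

definition entropy2 :: "'a set \<Rightarrow> ('a \<Rightarrow> real) \<Rightarrow> real" where
  "entropy2 A p = - (\<Sum>a\<in>A. if p a = 0 then 0 else p a * log 2 (p a))"

abbreviation words :: "nat \<Rightarrow> 'x list set" where
  "words n \<equiv> {xs. length xs = n}"

text \<open>A stationary process over the finite alphabet 'x, given by its family of
  finite-dimensional marginals Q n (a pmf on words of length n), which is
  consistent and shift-invariant.\<close>
definition stationary_process :: "(nat \<Rightarrow> 'x::finite list \<Rightarrow> real) \<Rightarrow> bool" where
  "stationary_process Q \<longleftrightarrow>
     (\<forall>n. is_pmf_on (words n) (Q n)) \<and>
     (\<forall>n xs. length xs = n \<longrightarrow> Q n xs = (\<Sum>a\<in>UNIV. Q (Suc n) (xs @ [a]))) \<and>
     (\<forall>n xs. length xs = n \<longrightarrow> Q n xs = (\<Sum>a\<in>UNIV. Q (Suc n) (a # xs)))"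

definition cond_entropy_last :: "(nat \<Rightarrow> 'x list \<Rightarrow> real) \<Rightarrow> nat \<Rightarrow> real" where
  "cond_entropy_last Q l =
     - (\<Sum>xs\<in>words l. if Q l xs = 0 then 0
          else Q l xs * log 2 (Q l xs / Q (l - 1) (butlast xs)))"

end

theory Submission
  imports Defs
begin


lemma log0: "log 2 (0::real) = 0" by (simp add: log_def)
lemma finite_words: "finite (words n :: ('x::finite) list set)"
  using finite_lists_length_eq[of "UNIV::'x set" n] by simp

lemma sum_words_Suc_cons:
  "(\<Sum>ys\<in>words (Suc n). F ys) = (\<Sum>x\<in>(UNIV::'x::finite set). \<Sum>xs\<in>words n. F (x # xs))"
proof -
  have e: "words (Suc n) = (\<lambda>(x::'x,xs). x # xs) ` (UNIV \<times> words n)"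
    by (auto simp: length_Suc_conv image_iff)
  have i: "inj_on (\<lambda>(x::'x,xs). x # xs) (UNIV \<times> words n)" by (auto simp: inj_on_def)
  show ?thesis unfolding e sum.reindex[OF i]
    by (simp add: sum.cartesian_product finite_words split_def)
qed

lemma sum_words_Suc_snoc:
  "(\<Sum>ys\<in>words (Suc n). F ys) = (\<Sum>xs\<in>words n. \<Sum>x\<in>(UNIV::'x::finite set). F (xs @ [x]))"
proof -
  have e: "words (Suc n) = (\<lambda>(xs,x::'x). xs @ [x]) ` (words n \<times> UNIV)"
  proof -
    have "ys \<in> (\<lambda>(xs,x). xs @ [x]) ` (words n \<times> UNIV)" if l: "length ys = Suc n" for ys :: "'x list"
    proof -
      have "ys = butlast ys @ [last ys]" using l
        by (metis append_butlast_last_id length_greater_0_conv zero_less_Suc)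
      then show ?thesis
        using l by (intro image_eqI[of _ _ "(butlast ys, last ys)"]) auto
    qed
    then show ?thesis by (intro equalityI subsetI) (simp_all, auto)
  qed
  have i: "inj_on (\<lambda>(xs,x::'x). xs @ [x]) (words n \<times> UNIV)" by (auto simp: inj_on_def)
  show ?thesis unfolding e sum.reindex[OF i]
    by (simp add: sum.cartesian_product finite_words split_def)
qed
lemma mat_pow_nonneg:
  assumes "\<And>a b. K a b \<ge> 0" shows "mat_pow K n a b \<ge> 0"
  by (induction n arbitrary: b) (auto intro!: sum_nonneg mult_nonneg_nonneg assms)

lemma mat_pow_add:
  "mat_pow K (n + k) a c = (\<Sum>w\<in>UNIV. mat_pow K n a w * mat_pow K k w c)"
proof (induction k arbitrary: c)
  case 0
  then show ?case by (simp add: if_distrib cong: if_cong)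
next
  case (Suc k)
  have "mat_pow K (n + Suc k) a c = (\<Sum>v\<in>UNIV. mat_pow K (n + k) a v * K v c)" by simp
  also have "\<dots> = (\<Sum>v\<in>UNIV. \<Sum>w\<in>UNIV. mat_pow K n a w * mat_pow K k w v * K v c)"
    by (simp add: Suc sum_distrib_right)
  also have "\<dots> = (\<Sum>w\<in>UNIV. \<Sum>v\<in>UNIV. mat_pow K n a w * (mat_pow K k w v * K v c))"
    by (subst sum.swap) (simp add: mult.assoc)
  also have "\<dots> = (\<Sum>w\<in>UNIV. mat_pow K n a w * mat_pow K (Suc k) w c)"
    by (simp add: sum_distrib_left)
  finally show ?case .
qed

lemma mat_pow_Suc_left:
  "mat_pow K (Suc n) a c = (\<Sum>w\<in>UNIV. K a w * mat_pow K n w c)"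
proof -
  have "mat_pow K 1 a w = K a w" for w
    by (simp add: if_distrib[where f="\<lambda>t. t * K _ w"] cong: if_cong)
  then show ?thesis using mat_pow_add[of K 1 n a c] by simp
qed

lemma mat_pow_ge_term:
  assumes "\<And>a b. K a b \<ge> 0"
  shows "mat_pow K (n + k) a c \<ge> mat_pow K n a w * mat_pow K k w c"
  unfolding mat_pow_add
  by (rule member_le_sum) (auto intro: mult_nonneg_nonneg mat_pow_nonneg assms)
lemma kraft_nonneg: "kraft_matrix f g a b \<ge> 0"
  by (simp add: kraft_matrix_def sum_nonneg)

lemma len_le_Lmax: "length (f z x) \<le> L_max (f :: 'z::finite \<Rightarrow> 'x::finite \<Rightarrow> bool list)"
proof -
  have "{length (f z x) | z x. True} = (\<lambda>(z,x). length (f z x)) ` UNIV" by auto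
  then have fin: "finite {length (f z x) | z x. True}" by simp
  show ?thesis unfolding L_max_def by (rule Max_ge[OF fin]) auto
qed

lemma kraft_pos_lower:
  fixes f :: "'z::finite \<Rightarrow> 'x::finite \<Rightarrow> bool list"
  assumes "kraft_matrix f g a b > 0"
  shows "kraft_matrix f g a b \<ge> 2 powr (- real (L_max f))"
proof -
  obtain x where x: "g a x = b"
    using assms unfolding kraft_matrix_def by (metis (mono_tags, lifting) empty_Collect_eq less_irrefl sum.empty)
  have "2 powr (- real (L_max f)) \<le> 2 powr (- real (length (f a x)))"
    using len_le_Lmax[of f a x] by simp
  also have "\<dots> \<le> kraft_matrix f g a b" unfolding kraft_matrix_def
    by (rule member_le_sum) (use x in auto)
  finally show ?thesis .
qed

lemma mat_pow_pos_lower: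
  fixes f :: "'z::finite \<Rightarrow> 'x::finite \<Rightarrow> bool list"
  assumes "mat_pow (kraft_matrix f g) k a b > 0"
  shows "mat_pow (kraft_matrix f g) k a b \<ge> 2 powr (- (real k * real (L_max f)))"
  using assms
proof (induction k arbitrary: b)
  case 0
  then show ?case by (simp split: if_splits)
next
  case (Suc k)
  let ?K = "kraft_matrix f g"
  have nn: "\<And>w. mat_pow ?K k a w \<ge> 0" by (rule mat_pow_nonneg[OF kraft_nonneg])
  have "\<exists>w. mat_pow ?K k a w * ?K w b > 0"
  proof (rule ccontr)
    assume "\<not> (\<exists>w. mat_pow ?K k a w * ?K w b > 0)"
    then have "\<forall>w. mat_pow ?K k a w * ?K w b \<le> 0" by (meson not_le)
    then have "mat_pow ?K (Suc k) a b \<le> 0" by (simp add: sum_nonpos)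
    with Suc.prems show False by simp
  qed
  then obtain w where w: "mat_pow ?K k a w * ?K w b > 0" by blast
  have p1: "mat_pow ?K k a w > 0" using w nn[of w] kraft_nonneg[of f g w b]
    by (metis less_eq_real_def mult_zero_left)
  have p2: "?K w b > 0" using w nn[of w] kraft_nonneg[of f g w b]
    by (metis less_eq_real_def mult_zero_right)
  have "2 powr (- (real (Suc k) * real (L_max f))) = 2 powr (- (real k * real (L_max f))) * 2 powr (- real (L_max f))"
    by (simp add: powr_add[symmetric] algebra_simps)
  also have "\<dots> \<le> mat_pow ?K k a w * ?K w b"
    by (rule mult_mono) (use Suc.IH[OF p1] kraft_pos_lower[OF p2] nn in auto)
  also have "\<dots> \<le> mat_pow ?K (Suc k) a b"
    by simp (rule member_le_sum, auto intro: mult_nonneg_nonneg nn kraft_nonneg)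
  finally show ?case .
qed

lemma mat_pow_words:
  fixes f :: "'z::finite \<Rightarrow> 'x::finite \<Rightarrow> bool list"
  shows "mat_pow (kraft_matrix f g) n z z' =
    (\<Sum>xs\<in>words n. if gstar g z xs = z' then 2 powr (- real (length (fstar f g z xs))) else 0)"
proof (induction n arbitrary: z)
  case 0
  have "words 0 = {[] :: 'x list}" by auto
  then show ?case by simp
next
  case (Suc n)
  let ?W = "\<lambda>n w. (\<Sum>xs\<in>words n. if gstar g w xs = z' then 2 powr (- real (length (fstar f g w xs))) else (0::real))"
  have "mat_pow (kraft_matrix f g) (Suc n) z z' = (\<Sum>w\<in>UNIV. kraft_matrix f g z w * ?W n w)"
    by (subst mat_pow_Suc_left) (simp add: Suc)
  also have "\<dots> = (\<Sum>w\<in>UNIV. \<Sum>x\<in>{x\<in>UNIV. g z x = w}. 2 powr (- real (length (f z x))) * ?W n (g z x))"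
    unfolding kraft_matrix_def sum_distrib_right by (intro sum.cong) auto
  also have "\<dots> = (\<Sum>x\<in>UNIV. 2 powr (- real (length (f z x))) * ?W n (g z x))"
    by (rule sum.group) auto
  also have "\<dots> = ?W (Suc n) z"
    unfolding sum_words_Suc_cons sum_distrib_left
    by (intro sum.cong refl) (simp add: powr_add[symmetric] algebra_simps)
  finally show ?case .
qed
lemma fstar_len:
  fixes f :: "'z::finite \<Rightarrow> 'x::finite \<Rightarrow> bool list"
  shows "length (fstar f g z xs) \<le> length xs * L_max f"
proof (induction xs arbitrary: z)
  case Nil then show ?case by simp
next
  case (Cons x xs)
  show ?case using Cons.IH[of "g z x"] len_le_Lmax[of f z x] by simp
qed

lemma kraft_sum_bool:
  assumes "U \<subseteq> {w::bool list. length w \<le> K}"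
  shows "(\<Sum>w\<in>U. 2 powr (- real (length w))) \<le> real K + 1"
proof -
  let ?T = "{w::bool list. length w \<le> K}"
  have finT: "finite ?T" using finite_lists_length_le[of "UNIV::bool set" K] by simp
  have "(\<Sum>w\<in>U. 2 powr (- real (length w))) \<le> (\<Sum>w\<in>?T. 2 powr (- real (length w)))"
    by (rule sum_mono2[OF finT assms]) auto
  also have "\<dots> = (\<Sum>k\<in>{..K}. \<Sum>w\<in>{w\<in>?T. length w = k}. 2 powr (- real (length w)))"
    by (rule sum.group[symmetric]) (use finT in auto)
  also have "\<dots> = (\<Sum>k\<in>{..K}. (1::real))"
  proof (rule sum.cong[OF refl])
    fix k assume k: "k \<in> {..K}"
    have e: "{w\<in>?T. length w = k} = {w. set w \<subseteq> (UNIV::bool set) \<and> length w = k}" using k by auto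
    have c: "card {w\<in>?T. length w = k} = 2 ^ k" unfolding e card_lists_length_eq[OF finite_UNIV] by simp
    have "(\<Sum>w\<in>{w\<in>?T. length w = k}. 2 powr (- real (length w))) = (\<Sum>w\<in>{w\<in>?T. length w = k}. 2 powr (- real k))"
      by (rule sum.cong) auto
    also have "\<dots> = real (2 ^ k) * 2 powr (- real k)" using c by simp
    also have "\<dots> = 1" by (simp add: powr_minus powr_realpow)
    finally show "(\<Sum>w\<in>{w\<in>?T. length w = k}. 2 powr (- real (length w))) = 1" .
  qed
  also have "\<dots> = real K + 1" by simp
  finally show ?thesis .
qed

lemma IL_bound:
  fixes f :: "'z::finite \<Rightarrow> 'x::finite \<Rightarrow> bool list"
  assumes IL: "info_lossless f g"
  shows "mat_pow (kraft_matrix f g) N z z' \<le> real N * real (L_max f) + 1"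
proof (cases "N = 0")
  case True then show ?thesis by simp
next
  case False
  let ?T = "{xs\<in>words N. gstar g z xs = z'}"
  have inj: "inj_on (fstar f g z) ?T"
  proof (rule inj_onI)
    fix x y assume x: "x \<in> ?T" and y: "y \<in> ?T" and e: "fstar f g z x = fstar f g z y"
    have "inj_on (\<lambda>xs. (fstar f g z xs, gstar g z xs)) (words N)"
      using IL False unfolding info_lossless_def by auto
    then show "x = y" using x y e by (auto dest: inj_onD)
  qed
  have "mat_pow (kraft_matrix f g) N z z' = (\<Sum>xs\<in>?T. 2 powr (- real (length (fstar f g z xs))))"
    unfolding mat_pow_words by (simp add: sum.inter_filter[symmetric] finite_words)
  also have "\<dots> = (\<Sum>w\<in>fstar f g z ` ?T. 2 powr (- real (length w)))"
    using sum.reindex[OF inj, of "\<lambda>w. 2 powr (- real (length w))"] by simp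
  also have "\<dots> \<le> real (N * L_max f) + 1"
    by (rule kraft_sum_bool) (use fstar_len[of f g z] in fastforce)
  finally show ?thesis by simp
qed
lemma pos_Suc:
  assumes nn: "\<And>a b. K a b \<ge> (0::real)"
  shows "mat_pow K (Suc k) a b > 0 \<longleftrightarrow> (\<exists>w. mat_pow K k a w > 0 \<and> K w b > 0)"
proof
  assume h: "mat_pow K (Suc k) a b > 0"
  show "\<exists>w. mat_pow K k a w > 0 \<and> K w b > 0"
  proof (rule ccontr)
    assume c: "\<not> (\<exists>w. mat_pow K k a w > 0 \<and> K w b > 0)"
    have z: "mat_pow K k a w * K w b = 0" for w
    proof -
      have h1: "mat_pow K k a w \<ge> 0" by (rule mat_pow_nonneg[of K, OF nn])
      have h2: "K w b \<ge> 0" by (rule nn)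
      from c have "\<not> (mat_pow K k a w > 0 \<and> K w b > 0)" by blast
      then have "mat_pow K k a w = 0 \<or> K w b = 0" using h1 h2 by linarith
      then show ?thesis by auto
    qed
    have "mat_pow K (Suc k) a b = 0" by (simp only: mat_pow.simps z sum.neutral_const)
    with h show False by simp
  qed
next
  assume "\<exists>w. mat_pow K k a w > 0 \<and> K w b > 0"
  then obtain w where w: "mat_pow K k a w > 0" "K w b > 0" by blast
  have "0 < mat_pow K k a w * K w b" using w by simp
  also have "\<dots> \<le> (\<Sum>v\<in>UNIV. mat_pow K k a v * K v b)"
    by (rule member_le_sum) (auto intro: mult_nonneg_nonneg mat_pow_nonneg[of K, OF nn] nn)
  also have "\<dots> = mat_pow K (Suc k) a b" by simp
  finally show "mat_pow K (Suc k) a b > 0" .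
qed

lemma reach_short:
  fixes K :: "'z::finite \<Rightarrow> 'z \<Rightarrow> real"
  assumes nn: "\<And>a b. K a b \<ge> 0" and irr: "irreducible_matrix K"
  shows "\<exists>k \<le> card (UNIV::'z set) - 1. mat_pow K k a b > 0"
proof -
  define S where "S j = {b. \<exists>k\<le>j. mat_pow K k a b > 0}" for j
  define G where "G X = insert a {b. \<exists>w\<in>X. K w b > 0}" for X
  have S0: "S 0 = {a}" unfolding S_def by auto
  have SSuc: "S (Suc j) = G (S j)" for j
  proof
    show "S (Suc j) \<subseteq> G (S j)"
    proof
      fix b assume "b \<in> S (Suc j)"
      then obtain k where k: "k \<le> Suc j" "mat_pow K k a b > 0" unfolding S_def by auto
      show "b \<in> G (S j)"
      proof (cases k)
        case 0 then show ?thesis using k by (simp add: G_def split: if_splits)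
      next
        case (Suc k')
        then obtain w where "mat_pow K k' a w > 0" "K w b > 0" using k pos_Suc[of K, OF nn] by blast
        then show ?thesis using k Suc unfolding G_def S_def by auto
      qed
    qed
  next
    show "G (S j) \<subseteq> S (Suc j)"
    proof
      fix b assume "b \<in> G (S j)"
      then consider "b = a" | w k where "k \<le> j" "mat_pow K k a w > 0" "K w b > 0"
        unfolding G_def S_def by auto
      then show "b \<in> S (Suc j)"
      proof cases
        case 1 then show ?thesis unfolding S_def by (intro CollectI exI[of _ 0]) simp
      next
        case 2
        then have "mat_pow K (Suc k) a b > 0" using pos_Suc[of K, OF nn] by blast
        then show ?thesis using 2 unfolding S_def by (intro CollectI exI[of _ "Suc k"]) simp
      qed
    qed
  qed
  have mono: "i \<le> j \<Longrightarrow> S i \<subseteq> S j" for i j unfolding S_def using le_trans by blast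
  have stable: "S (Suc i) = S i \<Longrightarrow> S (i + m) = S i" for i m
  proof (induction m)
    case 0 then show ?case by simp
  next
    case (Suc m)
    have "S (i + Suc m) = G (S (i + m))" by (simp add: SSuc)
    also have "\<dots> = G (S i)" using Suc by simp
    also have "\<dots> = S i" using Suc.prems SSuc by simp
    finally show ?case .
  qed
  have grow: "Suc j \<le> card (S j) \<or> (\<exists>i\<le>j. S (Suc i) = S i)" for j
  proof (induction j)
    case 0 then show ?case using S0 by simp
  next
    case (Suc j)
    show ?case
    proof (cases "\<exists>i\<le>j. S (Suc i) = S i")
      case True then show ?thesis using le_SucI by blast
    next
      case False
      then have c: "Suc j \<le> card (S j)" and ne: "S (Suc j) \<noteq> S j" using Suc by auto
      have "S j \<subset> S (Suc j)" using mono[of j "Suc j"] ne by auto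
      then have "card (S j) < card (S (Suc j))" by (rule psubset_card_mono[OF finite])
      then show ?thesis using c by simp
    qed
  qed
  have "b \<in> S (card (UNIV::'z set) - 1)"
  proof (cases "\<exists>i\<le>card (UNIV::'z set) - 1. S (Suc i) = S i")
    case True
    then obtain i where i: "i \<le> card (UNIV::'z set) - 1" "S (Suc i) = S i" by blast
    obtain k where k: "mat_pow K k a b > 0" using irr unfolding irreducible_matrix_def by blast
    have "b \<in> S (i + k)" unfolding S_def using k le_add2 by blast
    then have "b \<in> S i" using stable[OF i(2)] by simp
    then show ?thesis using mono[OF i(1)] by auto
  next
    case False
    have s1: "card (UNIV::'z set) \<ge> 1" by (simp add: Suc_leI finite_UNIV_card_ge_0)
    have "Suc (card (UNIV::'z set) - 1) \<le> card (S (card (UNIV::'z set) - 1))"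
      using grow[of "card (UNIV::'z set) - 1"] False by blast
    then have "card (UNIV::'z set) \<le> card (S (card (UNIV::'z set) - 1))" using s1 by simp
    then have "S (card (UNIV::'z set) - 1) = UNIV"
      by (intro card_seteq[OF finite_UNIV subset_UNIV])
    then show ?thesis by simp
  qed
  then show ?thesis unfolding S_def by auto
qed


lemma growth:
  fixes b C :: real
  assumes b: "b > 1" and C: "C \<ge> 0" and h: "\<And>j. j \<ge> 1 \<Longrightarrow> b ^ j \<le> real j * C + 1"
  shows False
proof -
  define d where "d = b - 1"
  have d: "d > 0" using b d_def by simp
  obtain J :: nat where J: "2 * C / d^2 < real J" using reals_Archimedean2 by blast
  have "0 \<le> 2 * C / d^2" using C d by simp
  then have Jpos: "real J > 0" using J by linarith
  have "2 * C < real J * d^2" using J d by (simp add: field_simps)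
  from mult_strict_left_mono[OF this Jpos]
  have key: "2 * real J * C < real J * real J * d^2" by (simp add: algebra_simps)
  have bern: "1 + real J * d \<le> b ^ J" using Bernoulli_inequality[of d J] d unfolding d_def by simp
  have "(1 + real J * d)^2 \<le> (b ^ J)^2"
    using bern d Jpos by (intro power_mono) auto
  then have A: "(1 + real J * d)^2 \<le> b ^ (2 * J)" by (simp add: power_mult[symmetric] mult.commute)
  have B: "(1 + real J * d)^2 = 1 + 2 * real J * d + real J * real J * d^2"
    by (simp add: power2_eq_square algebra_simps)
  have Cc: "b ^ (2 * J) \<le> 2 * real J * C + 1" using h[of "2 * J"] Jpos by simp
  have D: "0 < 2 * real J * d" using Jpos d by simp
  from A B Cc D key show False by linarith
qed



lemma entry_bound:
  fixes f :: "'z::finite \<Rightarrow> 'x::finite \<Rightarrow> bool list"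
  assumes IL: "info_lossless f g" and irr: "irreducible_matrix (kraft_matrix f g)"
  shows "mat_pow (kraft_matrix f g) n z z' \<le> 2 powr ((real (card (UNIV::'z set)) - 1) * real (L_max f))"
proof (rule ccontr)
  let ?K = "kraft_matrix f g"
  let ?s = "card (UNIV::'z set)"
  let ?M = "L_max f"
  define B where "B = 2 powr ((real ?s - 1) * real ?M)"
  assume "\<not> ?thesis"
  then have v: "mat_pow ?K n z z' > B" unfolding B_def by simp
  obtain k where k: "k \<le> ?s - 1" "mat_pow ?K k z' z > 0"
    using reach_short[of ?K, OF kraft_nonneg irr] by blast
  have s1: "?s \<ge> 1" by (simp add: Suc_leI finite_UNIV_card_ge_0)
  have kr: "real k \<le> real ?s - 1" using k(1) s1 by linarith
  have "2 powr (- ((real ?s - 1) * real ?M)) \<le> 2 powr (- (real k * real ?M))"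
    using kr by (intro powr_mono) (auto intro: mult_right_mono)
  also have "\<dots> \<le> mat_pow ?K k z' z" by (rule mat_pow_pos_lower[OF k(2)])
  finally have w: "mat_pow ?K k z' z \<ge> 1 / B" unfolding B_def by (simp add: powr_minus divide_inverse)
  have Bpos: "B > 0" unfolding B_def by simp
  define m where "m = n + k"
  define b where "b = mat_pow ?K m z z"
  have "b \<ge> mat_pow ?K n z z' * mat_pow ?K k z' z"
    unfolding b_def m_def by (rule mat_pow_ge_term[OF kraft_nonneg])
  moreover have "mat_pow ?K n z z' * mat_pow ?K k z' z > B * (1 / B)"
    by (rule mult_less_le_imp_less) (use v w Bpos in auto)
  ultimately have b1: "b > 1" using Bpos by simp
  have pw: "mat_pow ?K (j * m) z z \<ge> b ^ j" for j
  proof (induction j)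
    case 0 then show ?case by simp
  next
    case (Suc j)
    have "b ^ Suc j = b ^ j * b" by simp
    also have "\<dots> \<le> mat_pow ?K (j * m) z z * mat_pow ?K m z z"
      using Suc b1 unfolding b_def by (intro mult_mono) (auto intro: mat_pow_nonneg kraft_nonneg)
    also have "\<dots> \<le> mat_pow ?K (j * m + m) z z" by (rule mat_pow_ge_term[OF kraft_nonneg])
    finally show ?case by (simp add: add.commute)
  qed
  have "b ^ j \<le> real j * (real m * real ?M) + 1" for j
    using pw[of j] IL_bound[OF IL, of "j * m" z z] by (simp add: algebra_simps)
  then show False using growth[OF b1, of "real m * real ?M"] by simp
qed



lemma gibbs:
  fixes p q :: "'a \<Rightarrow> real"
  assumes fin: "finite A" and pnn: "\<And>a. a \<in> A \<Longrightarrow> p a \<ge> 0" and p1: "(\<Sum>a\<in>A. p a) = 1"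
    and qnn: "\<And>a. a \<in> A \<Longrightarrow> q a \<ge> 0" and qpos: "\<And>a. a \<in> A \<Longrightarrow> p a > 0 \<Longrightarrow> q a > 0"
  shows "(\<Sum>a\<in>A. p a * log 2 (q a / p a)) \<le> log 2 (\<Sum>a\<in>A. q a)"
proof -
  define S where "S = (\<Sum>a\<in>A. q a)"
  obtain a0 where a0: "a0 \<in> A" "p a0 > 0"
  proof (rule ccontr)
    assume "\<not> thesis"
    then have "\<forall>a\<in>A. p a \<le> 0" using that by (meson not_le)
    then have "(\<Sum>a\<in>A. p a) \<le> 0" by (simp add: sum_nonpos)
    with p1 show False by simp
  qed
  have Spos: "S > 0"
  proof -
    have "q a0 \<le> S" unfolding S_def by (rule member_le_sum[OF a0(1)]) (use qnn fin in auto)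
    with qpos[OF a0] show ?thesis by simp
  qed
  have ln2: "ln (2::real) > 0" by simp
  have tm: "p a * log 2 (q a / p a) \<le> p a * log 2 S + (q a / S - p a) / ln 2" if a: "a \<in> A" for a
  proof (cases "p a = 0")
    case True
    then show ?thesis using qnn[OF a] Spos ln2 by simp
  next
    case False
    then have pa: "p a > 0" using pnn[OF a] by simp
    have qa: "q a > 0" using qpos[OF a pa] .
    have "ln (q a / (S * p a)) \<le> q a / (S * p a) - 1"
      by (rule ln_le_minus_one) (use pa qa Spos in simp)
    then have "p a * ln (q a / (S * p a)) \<le> p a * (q a / (S * p a) - 1)"
      using pa by (simp add: mult_left_mono)
    also have "\<dots> = q a / S - p a" using pa Spos by (simp add: field_simps)
    finally have i: "p a * ln (q a / (S * p a)) \<le> q a / S - p a" .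
    have "ln (q a / p a) = ln (q a / (S * p a)) + ln S"
      using pa qa Spos by (simp add: ln_div ln_mult)
    then have "p a * log 2 (q a / p a) = p a * log 2 S + p a * ln (q a / (S * p a)) / ln 2"
      by (simp add: log_def field_simps)
    also have "\<dots> \<le> p a * log 2 S + (q a / S - p a) / ln 2"
      using i ln2 by (simp add: divide_right_mono)
    finally show ?thesis .
  qed
  have "(\<Sum>a\<in>A. p a * log 2 (q a / p a)) \<le> (\<Sum>a\<in>A. p a * log 2 S + (q a / S - p a) / ln 2)"
    by (rule sum_mono) (rule tm)
  also have "\<dots> = log 2 S * (\<Sum>a\<in>A. p a) + ((\<Sum>a\<in>A. q a) / S - (\<Sum>a\<in>A. p a)) / ln 2"
    by (simp add: sum.distrib sum_distrib_left sum_distrib_right sum_subtractf sum_divide_distrib[symmetric] mult.commute)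
  also have "\<dots> = log 2 S" using p1 Spos unfolding S_def by simp
  finally show ?thesis unfolding S_def .
qed

lemma entropy2_alt: "entropy2 A p = - (\<Sum>a\<in>A. p a * log 2 (p a))"
  unfolding entropy2_def by (intro arg_cong[where f=uminus] sum.cong) auto




lemma row_sum:
  fixes f :: "'z::finite \<Rightarrow> 'x::finite \<Rightarrow> bool list"
  shows "(\<Sum>xs\<in>words l. 2 powr (- real (length (fstar f g z xs)))) = (\<Sum>z'\<in>UNIV. mat_pow (kraft_matrix f g) l z z')"
proof -
  have "(\<Sum>z'\<in>UNIV. mat_pow (kraft_matrix f g) l z z') =
     (\<Sum>xs\<in>words l. \<Sum>z'\<in>UNIV. if gstar g z xs = z' then 2 powr (- real (length (fstar f g z xs))) else 0)"
    unfolding mat_pow_words by (rule sum.swap)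
  also have "\<dots> = (\<Sum>xs\<in>words l. 2 powr (- real (length (fstar f g z xs))))"
    by (simp add: sum.delta)
  finally show ?thesis by simp
qed

lemma part1:
  fixes f :: "'z::finite \<Rightarrow> 'x::finite \<Rightarrow> bool list" and P :: "'z \<times> 'x list \<Rightarrow> real"
  assumes IL: "info_lossless f g" and irr: "irreducible_matrix (kraft_matrix f g)"
    and P: "is_pmf_on (UNIV \<times> words l) P"
  shows "entropy2 (UNIV \<times> words l) P - (\<Sum>(z, xs)\<in>UNIV \<times> words l. P (z, xs) * real (length (fstar f g z xs)))
     \<le> 2 * log 2 (real (card (UNIV :: 'z set))) + (real (card (UNIV :: 'z set)) - 1) * real (L_max f)"
proof -
  let ?A = "(UNIV::'z set) \<times> (words l :: 'x list set)"
  let ?s = "card (UNIV :: 'z set)"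
  define B where "B = 2 powr ((real ?s - 1) * real (L_max f))"
  define q where "q a = 2 powr (- real (length (fstar f g (fst a) (snd a))))" for a
  have finA: "finite ?A" by (intro finite_cartesian_product finite_UNIV finite_words)
  have Pnn: "\<And>a. P a \<ge> 0" and P1: "(\<Sum>a\<in>?A. P a) = 1" using P unfolding is_pmf_on_def by auto
  have G: "(\<Sum>a\<in>?A. P a * log 2 (q a / P a)) \<le> log 2 (\<Sum>a\<in>?A. q a)"
    by (rule gibbs[OF finA]) (auto simp: Pnn P1 q_def)
  have eq: "P a * log 2 (q a / P a) = - (P a * real (length (fstar f g (fst a) (snd a)))) - P a * log 2 (P a)" for a
  proof (cases "P a = 0")
    case True then show ?thesis by simp
  next
    case False
    then have "P a > 0" using Pnn[of a] by simp
    then show ?thesis unfolding q_def by (simp add: log_divide_pos log_powr_cancel algebra_simps)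
  qed
  have L: "(\<Sum>a\<in>?A. P a * log 2 (q a / P a)) =
      entropy2 ?A P - (\<Sum>(z, xs)\<in>?A. P (z, xs) * real (length (fstar f g z xs)))"
    unfolding eq entropy2_alt by (simp add: sum_subtractf sum_negf split_def)
  have qsum: "(\<Sum>a\<in>?A. q a) = (\<Sum>z\<in>UNIV. \<Sum>z'\<in>UNIV. mat_pow (kraft_matrix f g) l z z')"
  proof -
    have "(\<Sum>a\<in>?A. q a) = (\<Sum>z\<in>UNIV. \<Sum>xs\<in>words l. q (z, xs))"
      by (simp add: sum.cartesian_product)
    also have "\<dots> = (\<Sum>z\<in>UNIV. \<Sum>z'\<in>UNIV. mat_pow (kraft_matrix f g) l z z')"
      unfolding q_def by (simp add: row_sum)
    finally show ?thesis .
  qed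
  also have "\<dots> \<le> (\<Sum>z\<in>(UNIV::'z set). \<Sum>z'\<in>(UNIV::'z set). B)"
    unfolding B_def by (intro sum_mono entry_bound[OF IL irr])
  also have "\<dots> = real ?s * real ?s * B" by simp
  finally have qle: "(\<Sum>a\<in>?A. q a) \<le> real ?s * real ?s * B" .
  have ne: "?A \<noteq> {}" by (auto intro!: exI[of _ "replicate l undefined"])
  have qpos: "(\<Sum>a\<in>?A. q a) > 0" by (rule sum_pos[OF finA ne]) (simp add: q_def)
  have s0: "real ?s > 0" by (simp add: finite_UNIV_card_ge_0)
  have "log 2 (\<Sum>a\<in>?A. q a) \<le> log 2 (real ?s * real ?s * B)"
    by (rule log_mono) (use qpos qle in auto)
  also have "\<dots> = 2 * log 2 (real ?s) + (real ?s - 1) * real (L_max f)"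
    using s0 unfolding B_def by (simp add: log_mult log_powr_cancel)
  finally show ?thesis using G L by simp
qed

lemma part2:
  fixes P :: "'z::finite \<times> 'x::finite list \<Rightarrow> real"
  assumes P: "is_pmf_on (UNIV \<times> words l) P"
  shows "entropy2 (words l) (\<lambda>xs. \<Sum>z\<in>UNIV. P (z, xs)) \<le> entropy2 (UNIV \<times> words l) P"
proof -
  have Pnn: "\<And>a. P a \<ge> 0" using P unfolding is_pmf_on_def by auto
  have t: "P (z, xs) * log 2 (P (z, xs)) \<le> P (z, xs) * log 2 (\<Sum>z\<in>UNIV. P (z, xs))" for z xs
  proof (cases "P (z, xs) = 0")
    case True then show ?thesis by simp
  next
    case False
    then have p: "P (z, xs) > 0" using Pnn by (simp add: less_le)
    have "P (z, xs) \<le> (\<Sum>z\<in>UNIV. P (z, xs))" by (rule member_le_sum) (auto simp: Pnn)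
    then show ?thesis using p by (intro mult_left_mono log_mono) auto
  qed
  have "(\<Sum>a\<in>UNIV \<times> words l. P a * log 2 (P a)) \<le> (\<Sum>(z,xs)\<in>UNIV \<times> words l. P (z, xs) * log 2 (\<Sum>z\<in>UNIV. P (z, xs)))"
    by (rule sum_mono) (auto simp: t)
  also have "\<dots> = (\<Sum>z\<in>UNIV. \<Sum>xs\<in>words l. P (z, xs) * log 2 (\<Sum>z\<in>UNIV. P (z, xs)))"
    by (simp add: sum.cartesian_product)
  also have "\<dots> = (\<Sum>xs\<in>words l. (\<Sum>z\<in>UNIV. P (z, xs)) * log 2 (\<Sum>z\<in>UNIV. P (z, xs)))"
    by (subst sum.swap) (simp add: sum_distrib_right)
  finally show ?thesis unfolding entropy2_alt by simp
qed



context
  fixes Q :: "nat \<Rightarrow> 'x::finite list \<Rightarrow> real"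
  assumes st: "stationary_process Q"
begin

lemma st_nn: "Q n xs \<ge> 0"
  using st unfolding stationary_process_def is_pmf_on_def by blast

lemma st_sum1: "(\<Sum>xs\<in>words n. Q n xs) = 1"
  using st unfolding stationary_process_def is_pmf_on_def by blast

lemma st_snoc: "length ys = n \<Longrightarrow> Q n ys = (\<Sum>a\<in>UNIV. Q (Suc n) (ys @ [a]))"
  using st unfolding stationary_process_def by blast

lemma st_cons: "length ys = n \<Longrightarrow> Q n ys = (\<Sum>a\<in>UNIV. Q (Suc n) (a # ys))"
  using st unfolding stationary_process_def by blast

lemma marg_butlast:
  "(\<Sum>xs\<in>words (Suc n). Q (Suc n) xs * F (butlast xs)) = (\<Sum>ys\<in>words n. Q n ys * F ys)"
proof -
  have "(\<Sum>xs\<in>words (Suc n). Q (Suc n) xs * F (butlast xs)) = (\<Sum>ys\<in>words n. (\<Sum>a\<in>UNIV. Q (Suc n) (ys @ [a])) * F ys)"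
    unfolding sum_words_Suc_snoc by (simp add: sum_distrib_right)
  also have "\<dots> = (\<Sum>ys\<in>words n. Q n ys * F ys)"
    by (intro sum.cong refl) (simp add: st_snoc)
  finally show ?thesis .
qed

lemma marg_tl:
  "(\<Sum>xs\<in>words (Suc n). Q (Suc n) xs * F (tl xs)) = (\<Sum>ys\<in>words n. Q n ys * F ys)"
proof -
  have "(\<Sum>xs\<in>words (Suc n). Q (Suc n) xs * F (tl xs)) = (\<Sum>ys\<in>words n. (\<Sum>a\<in>UNIV. Q (Suc n) (a # ys)) * F ys)"
    unfolding sum_words_Suc_cons by (subst sum.swap) (simp add: sum_distrib_right)
  also have "\<dots> = (\<Sum>ys\<in>words n. Q n ys * F ys)"
    by (intro sum.cong refl) (simp add: st_cons)
  finally show ?thesis .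
qed

lemma le_butlast:
  assumes "length xs = Suc n" shows "Q (Suc n) xs \<le> Q n (butlast xs)"
proof -
  have e: "xs = butlast xs @ [last xs]" using assms
    by (metis append_butlast_last_id length_greater_0_conv zero_less_Suc)
  have "Q (Suc n) (butlast xs @ [last xs]) \<le> (\<Sum>a\<in>UNIV. Q (Suc n) (butlast xs @ [a]))"
    by (rule member_le_sum) (auto simp: st_nn)
  also have "\<dots> = Q n (butlast xs)" using assms by (simp add: st_snoc)
  finally show ?thesis using e by simp
qed

lemma le_tl:
  assumes "length xs = Suc n" shows "Q (Suc n) xs \<le> Q n (tl xs)"
proof -
  have e: "xs = hd xs # tl xs" using assms
    by (metis hd_Cons_tl length_greater_0_conv zero_less_Suc)
  have "Q (Suc n) (hd xs # tl xs) \<le> (\<Sum>a\<in>UNIV. Q (Suc n) (a # tl xs))"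
    by (rule member_le_sum) (auto simp: st_nn)
  also have "\<dots> = Q n (tl xs)" using assms by (simp add: st_cons)
  finally show ?thesis using e by simp
qed

abbreviation "HH n \<equiv> entropy2 (words n) (Q n)"

lemma H0: "HH 0 = 0"
proof -
  have w: "words 0 = {[] :: 'x list}" by auto
  have "Q 0 [] = 1" using st_sum1[of 0] unfolding w by simp
  then show ?thesis unfolding entropy2_alt w by simp
qed

lemma chain: "cond_entropy_last Q (Suc n) = HH (Suc n) - HH n"
proof -
  have t: "(if Q (Suc n) xs = 0 then 0 else Q (Suc n) xs * log 2 (Q (Suc n) xs / Q n (butlast xs)))
      = Q (Suc n) xs * log 2 (Q (Suc n) xs) - Q (Suc n) xs * log 2 (Q n (butlast xs))"
    if xs: "xs \<in> words (Suc n)" for xs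
  proof (cases "Q (Suc n) xs = 0")
    case True then show ?thesis by simp
  next
    case False
    then have p: "Q (Suc n) xs > 0" using st_nn[of "Suc n" xs] by simp
    have "Q n (butlast xs) > 0" using le_butlast[of xs n] xs p by simp
    then show ?thesis using p by (simp add: log_divide_pos algebra_simps)
  qed
  have "cond_entropy_last Q (Suc n) =
     - (\<Sum>xs\<in>words (Suc n). Q (Suc n) xs * log 2 (Q (Suc n) xs) - Q (Suc n) xs * log 2 (Q n (butlast xs)))"
    unfolding cond_entropy_last_def diff_Suc_1 by (intro arg_cong[where f=uminus] sum.cong refl t)
  also have "\<dots> = HH (Suc n) + (\<Sum>xs\<in>words (Suc n). Q (Suc n) xs * log 2 (Q n (butlast xs)))"
    unfolding entropy2_alt by (simp add: sum_subtractf)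
  also have "\<dots> = HH (Suc n) - HH n"
    unfolding marg_butlast[of n "\<lambda>ys. log 2 (Q n ys)"] entropy2_alt by simp
  finally show ?thesis .
qed

lemma butlast_cs: "butlast (a # ys @ [b]) = a # ys"
  by (metis append_Cons butlast_snoc)

lemma ssa: "HH (Suc (Suc m)) + HH m \<le> 2 * HH (Suc m)"
proof -
  let ?A = "words (Suc (Suc m)) :: 'x list set"
  let ?p = "Q (Suc (Suc m))"
  define q where "q xs = Q (Suc m) (butlast xs) * Q (Suc m) (tl xs) / Q m (tl (butlast xs))" for xs
  have qpos: "q xs > 0" if xs: "xs \<in> ?A" and p: "?p xs > 0" for xs
  proof -
    have b: "Q (Suc m) (butlast xs) > 0" using le_butlast[of xs "Suc m"] xs p by simp
    have t: "Q (Suc m) (tl xs) > 0" using le_tl[of xs "Suc m"] xs p by simp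
    have "Q (Suc m) (butlast xs) \<le> Q m (tl (butlast xs))" using le_tl[of "butlast xs" m] xs by simp
    then have "Q m (tl (butlast xs)) > 0" using b by simp
    then show ?thesis using b t unfolding q_def by simp
  qed
  have inner: "(\<Sum>a\<in>UNIV. \<Sum>b\<in>UNIV. q (a # ys @ [b])) = Q m ys" if ys: "ys \<in> words m" for ys
  proof -
    have "(\<Sum>a\<in>UNIV. \<Sum>b\<in>UNIV. q (a # ys @ [b])) =
        (\<Sum>a\<in>UNIV. \<Sum>b\<in>UNIV. Q (Suc m) (a # ys) * Q (Suc m) (ys @ [b])) / Q m ys"
      unfolding q_def by (simp add: butlast_cs sum_divide_distrib)
    also have "\<dots> = (\<Sum>a\<in>UNIV. Q (Suc m) (a # ys)) * (\<Sum>b\<in>UNIV. Q (Suc m) (ys @ [b])) / Q m ys"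
      by (simp add: sum_product)
    also have "\<dots> = Q m ys * Q m ys / Q m ys" using ys st_cons[of ys m] st_snoc[of ys m] by simp
    also have "\<dots> = Q m ys" by simp
    finally show ?thesis .
  qed
  have qsum: "(\<Sum>xs\<in>?A. q xs) = 1"
  proof -
    have "(\<Sum>xs\<in>?A. q xs) = (\<Sum>a\<in>UNIV. \<Sum>ys\<in>words m. \<Sum>b\<in>UNIV. q (a # ys @ [b]))"
      by (subst sum_words_Suc_cons, subst sum_words_Suc_snoc) simp
    also have "\<dots> = (\<Sum>ys\<in>words m. \<Sum>a\<in>UNIV. \<Sum>b\<in>UNIV. q (a # ys @ [b]))"
      by (rule sum.swap)
    also have "\<dots> = (\<Sum>ys\<in>words m. Q m ys)" by (intro sum.cong refl inner) auto
    also have "\<dots> = 1" by (rule st_sum1)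
    finally show ?thesis .
  qed
  have qnn: "q xs \<ge> 0" for xs unfolding q_def by (intro divide_nonneg_nonneg mult_nonneg_nonneg st_nn)
  have G: "(\<Sum>xs\<in>?A. ?p xs * log 2 (q xs / ?p xs)) \<le> log 2 (\<Sum>xs\<in>?A. q xs)"
    by (rule gibbs[OF finite_words]) (auto simp: st_nn st_sum1 qpos qnn)
  have tm: "?p xs * log 2 (q xs / ?p xs) =
     ?p xs * log 2 (Q (Suc m) (butlast xs)) + ?p xs * log 2 (Q (Suc m) (tl xs))
     - ?p xs * log 2 (Q m (tl (butlast xs))) - ?p xs * log 2 (?p xs)" if xs: "xs \<in> ?A" for xs
  proof (cases "?p xs = 0")
    case True then show ?thesis by simp
  next
    case False
    then have p: "?p xs > 0" using st_nn[of "Suc (Suc m)" xs] by simp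
    have b: "Q (Suc m) (butlast xs) > 0" using le_butlast[of xs "Suc m"] xs p by simp
    have t: "Q (Suc m) (tl xs) > 0" using le_tl[of xs "Suc m"] xs p by simp
    have "Q (Suc m) (butlast xs) \<le> Q m (tl (butlast xs))" using le_tl[of "butlast xs" m] xs by simp
    then have mm: "Q m (tl (butlast xs)) > 0" using b by simp
    show ?thesis using p b t mm unfolding q_def
      by (simp add: log_divide_pos log_mult_pos algebra_simps)
  qed
  have s1: "(\<Sum>xs\<in>?A. ?p xs * log 2 (Q (Suc m) (butlast xs))) = - HH (Suc m)"
    unfolding marg_butlast[of "Suc m" "\<lambda>ys. log 2 (Q (Suc m) ys)"] entropy2_alt by simp
  have s2: "(\<Sum>xs\<in>?A. ?p xs * log 2 (Q (Suc m) (tl xs))) = - HH (Suc m)"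
    unfolding marg_tl[of "Suc m" "\<lambda>ys. log 2 (Q (Suc m) ys)"] entropy2_alt by simp
  have s3: "(\<Sum>xs\<in>?A. ?p xs * log 2 (Q m (tl (butlast xs)))) = - HH m"
    unfolding marg_butlast[of "Suc m" "\<lambda>ys. log 2 (Q m (tl ys))"] marg_tl[of m "\<lambda>ys. log 2 (Q m ys)"] entropy2_alt by simp
  have "(\<Sum>xs\<in>?A. ?p xs * log 2 (q xs / ?p xs)) =
     (\<Sum>xs\<in>?A. ?p xs * log 2 (Q (Suc m) (butlast xs))) + (\<Sum>xs\<in>?A. ?p xs * log 2 (Q (Suc m) (tl xs)))
     - (\<Sum>xs\<in>?A. ?p xs * log 2 (Q m (tl (butlast xs)))) - (\<Sum>xs\<in>?A. ?p xs * log 2 (?p xs))"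
    unfolding sum_subtractf[symmetric] sum.distrib[symmetric] by (rule sum.cong[OF refl tm])
  also have "\<dots> = - 2 * HH (Suc m) + HH m + HH (Suc (Suc m))"
    unfolding s1 s2 s3 entropy2_alt by simp
  finally show ?thesis using G qsum by simp
qed

lemma stat_bound: "real (Suc n) * cond_entropy_last Q (Suc n) \<le> HH (Suc n)"
proof (induction n)
  case 0 then show ?case by (simp only: chain H0) simp
next
  case (Suc n)
  have "real (Suc (Suc n)) * cond_entropy_last Q (Suc (Suc n))
      = real (Suc n) * (HH (Suc (Suc n)) - HH (Suc n)) + (HH (Suc (Suc n)) - HH (Suc n))"
    by (simp add: chain algebra_simps)
  also have "\<dots> \<le> real (Suc n) * (HH (Suc n) - HH n) + (HH (Suc (Suc n)) - HH (Suc n))"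
    using ssa[of n] by (intro add_right_mono mult_left_mono) auto
  also have "\<dots> \<le> HH (Suc (Suc n))" using Suc by (simp add: chain)
  finally show ?case .
qed

end

theorem mainTheorem6:
  fixes f :: "'z::finite \<Rightarrow> 'x::finite \<Rightarrow> bool list"
    and g :: "'z \<Rightarrow> 'x \<Rightarrow> 'z"
    and l :: nat
    and P :: "'z \<times> 'x list \<Rightarrow> real"
  assumes IL: "info_lossless f g"
    and irr: "irreducible_matrix (kraft_matrix f g)"
    and l_pos: "l \<ge> 1"
    and P: "is_pmf_on (UNIV \<times> words l) P"
  defines "c \<equiv> 2 * log 2 (real (card (UNIV :: 'z set))) + (real (card (UNIV :: 'z set)) - 1) * real (L_max f)"
    and "EL \<equiv> (\<Sum>(z, xs)\<in>UNIV \<times> words l. P (z, xs) * real (length (fstar f g z xs)))"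
    and "PX \<equiv> (\<lambda>xs. \<Sum>z\<in>UNIV. P (z, xs))"
  shows "EL / real l \<ge> entropy2 (UNIV \<times> words l) P / real l - c / real l
       \<and> entropy2 (UNIV \<times> words l) P / real l - c / real l
           \<ge> entropy2 (words l) PX / real l - c / real l
       \<and> (\<forall>Q. stationary_process Q \<and> (\<forall>xs\<in>words l. PX xs = Q l xs)
            \<longrightarrow> EL / real l \<ge> cond_entropy_last Q l - c / real l)"
proof -
  let ?H = "entropy2 (UNIV \<times> words l) P"
  have lp: "real l > 0" using l_pos by simp
  have h1: "?H - EL \<le> c" using part1[OF IL irr P] unfolding c_def EL_def .
  have h2: "entropy2 (words l) PX \<le> ?H" using part2[OF P] unfolding PX_def .
  have A: "?H / real l - c / real l \<le> EL / real l"
  proof -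
    have "?H - c \<le> EL" using h1 by simp
    then have "(?H - c) / real l \<le> EL / real l" using lp by (simp add: divide_right_mono)
    then show ?thesis by (simp add: diff_divide_distrib)
  qed
  have B: "entropy2 (words l) PX / real l - c / real l \<le> ?H / real l - c / real l"
    using h2 lp by (simp add: divide_right_mono)
  have C: "EL / real l \<ge> cond_entropy_last Q l - c / real l"
    if st: "stationary_process Q" and eq: "\<forall>xs\<in>words l. PX xs = Q l xs" for Q
  proof -
    obtain n where n: "l = Suc n" using l_pos by (cases l) auto
    have e: "entropy2 (words l) PX = entropy2 (words l) (Q l)"
      unfolding entropy2_def using eq by (intro arg_cong[where f=uminus] sum.cong) auto
    have "real l * cond_entropy_last Q l \<le> entropy2 (words l) (Q l)"
      using stat_bound[OF st, of n] n by simp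
    then have "cond_entropy_last Q l \<le> entropy2 (words l) (Q l) / real l"
      using lp by (simp add: field_simps)
    then have "cond_entropy_last Q l \<le> ?H / real l" using h2 e lp
      by (smt (verit) divide_right_mono)
    then show ?thesis using A by simp
  qed
  show ?thesis using A B C by blast
qed

end
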